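(* Let $m_1,m_2\ge 0$ and $s_1,s_2>0$. The falsification frontier is $$FF=\big(FF_{1,2}\cup FF_{2,1}\big)\cap[0,\infty)^2,$$ where for $(j,j')\in\{(1,2),(2,1)\}$ $$FF_{j,j'}=\Big\{(\delta_e,\delta_m)\in\mathbb{R}^2:\ \delta_m=\frac{m_j-m_{j'}-\delta_e\,(s_j+s_{j'})}{2}\Big\}.$$
   Context: Let $m_j=\mathbb{E}[\hat\theta^{j}/\alpha^{j}]$ and $s_j=\mathbb{E}[1/\alpha^{j}]$ for two variable inputs $j=1,2$, where $\alpha^j>0$ is the revenue share of input $j$ and $\hat\theta^j\ge0$ its estimated output elasticity; for the purposes of the statement these are arbitrary real numbers with $m_j\ge 0$, $s_j>0$. For $(\delta_e,\delta_m)\in[0,\infty)^2$ (uniform relaxation bounds on elasticity error and on departure from cost minimization) define $\mathrm{LB}_j(\delta_e,\delta_m)=m_j-\delta_e s_j-\delta_m$, $\mathrm{UB}_j(\delta_e,\delta_m)=m_j+\delta_e s_j+\delta_m$, $L=\max\{0,\mathrm{LB}_1,\mathrm{LB}_2\}$, $U=\min\{\mathrm{UB}_1,\mathrm{UB}_2\}$, and the identified set $I(\delta_e,\delta_m)=\{x\in\mathbb{R}: L\le x\le U\}$ (possibly empty). The falsification frontier $FF$ is the set of $(\delta_e,\delta_m)\in[0,\infty)^2$ such that $I(\delta_e,\delta_m)\neq\emptyset$ and $I(\delta_e',\delta_m')=\emptyset$ for every $(\delta_e',\delta_m')\in[0,\infty)^2$ with $\delta_e'\le\delta_e$, $\delta_m'\le\delta_m$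 and $(\delta_e',\delta_m')\neq(\delta_e,\delta_m)$. *)

theory Defs
  imports Complex_Main
begin

definition LB :: "real \<Rightarrow> real \<Rightarrow> real \<Rightarrow> real \<Rightarrow> real" where
  "LB m s de dm = m - de * s - dm"

definition UB :: "real \<Rightarrow> real \<Rightarrow> real \<Rightarrow> real \<Rightarrow> real" where
  "UB m s de dm = m + de * s + dm"

definition Lbound :: "real \<Rightarrow> real \<Rightarrow> real \<Rightarrow> real \<Rightarrow> real \<Rightarrow> real \<Rightarrow> real" where
  "Lbound m1 m2 s1 s2 de dm = max 0 (max (LB m1 s1 de dm) (LB m2 s2 de dm))"

definition Ubound :: "real \<Rightarrow> real \<Rightarrow> real \<Rightarrow> real \<Rightarrow> real \<Rightarrow> real \<Rightarrow> real" where
  "Ubound m1 m2 s1 s2 de dm = min (UB m1 s1 de dm) (UB m2 s2 de dm)"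

definition ident_set :: "real \<Rightarrow> real \<Rightarrow> real \<Rightarrow> real \<Rightarrow> real \<Rightarrow> real \<Rightarrow> real set" where
  "ident_set m1 m2 s1 s2 de dm =
     {x. Lbound m1 m2 s1 s2 de dm \<le> x \<and> x \<le> Ubound m1 m2 s1 s2 de dm}"

definition falsification_frontier :: "real \<Rightarrow> real \<Rightarrow> real \<Rightarrow> real \<Rightarrow> (real \<times> real) set" where
  "falsification_frontier m1 m2 s1 s2 =
     {(de, dm). 0 \<le> de \<and> 0 \<le> dm \<and> ident_set m1 m2 s1 s2 de dm \<noteq> {} \<and>
        (\<forall>de' dm'. 0 \<le> de' \<and> 0 \<le> dm' \<and> de' \<le> de \<and> dm' \<le> dm \<and> (de', dm') \<noteq> (de, dm)
           \<longrightarrow> ident_set m1 m2 s1 s2 de' dm' = {})}"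

definition FF_line :: "real \<Rightarrow> real \<Rightarrow> real \<Rightarrow> real \<Rightarrow> (real \<times> real) set" where
  "FF_line mj mj' sj sj' = {(de, dm). dm = (mj - mj' - de * (sj + sj')) / 2}"

end

theory Submission
  imports Defs
begin

lemma ne_iff:
  fixes m1 m2 s1 s2 de dm :: real
  assumes "m1 \<ge> 0" "m2 \<ge> 0" "s1 > 0" "s2 > 0" "de \<ge> 0" "dm \<ge> 0"
  shows "ident_set m1 m2 s1 s2 de dm \<noteq> {} \<longleftrightarrow>
     (m1 - m2 \<le> de * (s1 + s2) + 2 * dm \<and> m2 - m1 \<le> de * (s1 + s2) + 2 * dm)"
proof -
  have a: "ident_set m1 m2 s1 s2 de dm \<noteq> {} \<longleftrightarrow> Lbound m1 m2 s1 s2 de dm \<le> Ubound m1 m2 s1 s2 de dm"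
    unfolding ident_set_def by (auto intro: order_trans)
  have n1: "de * s1 \<ge> 0" and n2: "de * s2 \<ge> 0" using assms by auto
  show ?thesis unfolding a Lbound_def Ubound_def LB_def UB_def distrib_left
    using n1 n2 assms by (smt (verit))
qed

theorem proposition2:
  fixes m1 m2 s1 s2 :: real
  assumes "m1 \<ge> 0" "m2 \<ge> 0" "s1 > 0" "s2 > 0"
  shows "falsification_frontier m1 m2 s1 s2 =
           (FF_line m1 m2 s1 s2 \<union> FF_line m2 m1 s2 s1) \<inter> ({0..} \<times> {0..})"
proof (rule set_eqI, clarify)
  fix de dm :: real
  define S where "S = s1 + s2"
  have S: "S > 0" using assms by (simp add: S_def)
  have line: "(de, dm) \<in> (FF_line m1 m2 s1 s2 \<union> FF_line m2 m1 s2 s1) \<inter> ({0..} \<times> {0..})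
     \<longleftrightarrow> de \<ge> 0 \<and> dm \<ge> 0 \<and> (de * S + 2 * dm = m1 - m2 \<or> de * S + 2 * dm = m2 - m1)"
    unfolding FF_line_def S_def by (auto simp: algebra_simps)
  have ne: "\<And>a b. a \<ge> 0 \<Longrightarrow> b \<ge> 0 \<Longrightarrow> ident_set m1 m2 s1 s2 a b \<noteq> {} \<longleftrightarrow>
       (m1 - m2 \<le> a * S + 2 * b \<and> m2 - m1 \<le> a * S + 2 * b)"
    using ne_iff[OF assms] unfolding S_def by blast
  show "(de, dm) \<in> falsification_frontier m1 m2 s1 s2 \<longleftrightarrow>
     (de, dm) \<in> (FF_line m1 m2 s1 s2 \<union> FF_line m2 m1 s2 s1) \<inter> ({0..} \<times> {0..})"
    unfolding line
  proof
    assume h: "(de, dm) \<in> falsification_frontier m1 m2 s1 s2"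
    hence p: "de \<ge> 0" "dm \<ge> 0" and n: "ident_set m1 m2 s1 s2 de dm \<noteq> {}"
      and mn: "\<And>a b. 0 \<le> a \<Longrightarrow> 0 \<le> b \<Longrightarrow> a \<le> de \<Longrightarrow> b \<le> dm \<Longrightarrow> (a, b) \<noteq> (de, dm)
           \<Longrightarrow> ident_set m1 m2 s1 s2 a b = {}"
      unfolding falsification_frontier_def by auto
    have f: "m1 - m2 \<le> de * S + 2 * dm" "m2 - m1 \<le> de * S + 2 * dm" using ne[OF p] n by auto
    show "de \<ge> 0 \<and> dm \<ge> 0 \<and> (de * S + 2 * dm = m1 - m2 \<or> de * S + 2 * dm = m2 - m1)"
    proof (rule ccontr)
      assume "\<not> ?thesis"
      hence g: "m1 - m2 < de * S + 2 * dm" "m2 - m1 < de * S + 2 * dm" using f p by auto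
      define e where "e = de * S + 2 * dm - max (m1 - m2) (m2 - m1)"
      have e: "e > 0" using g by (simp add: e_def)
      show False
      proof (cases "dm > 0")
        case True
        define b where "b = max 0 (dm - e / 2)"
        have "b < dm" "b \<ge> 0" using True e by (auto simp: b_def)
        moreover have "m1 - m2 \<le> de * S + 2 * b \<and> m2 - m1 \<le> de * S + 2 * b"
        proof (cases "dm - e / 2 \<le> 0")
          case True
          hence "b = 0" "2 * dm \<le> e" by (auto simp: b_def)
          then show ?thesis using e_def by (smt (verit))
        next
          case False
          hence "2 * b = 2 * dm - e" by (auto simp: b_def)
          then show ?thesis unfolding e_def by linarith
        qed
        ultimately show False using mn[of de b] ne[of de b] p by auto
      next
        case False
        hence dm0: "dm = 0" using p by auto
        have de0: "de > 0"
        proof (rule ccontr)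
          assume "\<not> de > 0" hence "de = 0" using p by auto
          thus False using e dm0 unfolding e_def by auto
        qed
        define a where "a = max 0 (de - e / S)"
        have "a < de" "a \<ge> 0" using de0 e S by (auto simp: a_def)
        moreover have "a * S \<ge> de * S - e"
        proof (cases "de - e / S \<le> 0")
          case True
          hence "de * S \<le> e" using S by (simp add: field_simps)
          then show ?thesis using S \<open>a \<ge> 0\<close> by (smt (verit) mult_nonneg_nonneg)
        next
          case False
          hence "a = de - e / S" by (simp add: a_def)
          then show ?thesis using S by (simp add: field_simps)
        qed
        moreover have "m1 - m2 \<le> a * S + 2 * dm \<and> m2 - m1 \<le> a * S + 2 * dm"
          using calculation(3) unfolding e_def dm0 by auto
        ultimately show False using mn[of a dm] ne[of a dm] p by auto
      qed
    qed
  next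
    assume h: "de \<ge> 0 \<and> dm \<ge> 0 \<and> (de * S + 2 * dm = m1 - m2 \<or> de * S + 2 * dm = m2 - m1)"
    have f: "m1 - m2 \<le> de * S + 2 * dm" "m2 - m1 \<le> de * S + 2 * dm"
    proof -
      have "de * S \<ge> 0" using h S by simp
      then show "m1 - m2 \<le> de * S + 2 * dm" "m2 - m1 \<le> de * S + 2 * dm" using h by linarith+
    qed
    have nn: "ident_set m1 m2 s1 s2 de dm \<noteq> {}" using ne f h by auto
    have "ident_set m1 m2 s1 s2 a b = {}"
      if "0 \<le> a" "0 \<le> b" "a \<le> de" "b \<le> dm" "(a, b) \<noteq> (de, dm)" for a b
    proof -
      have "a * S + 2 * b < de * S + 2 * dm"
      proof (cases "a < de")
        case True
        then have "a * S < de * S" using S by simp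
        then show ?thesis using that by simp
      next
        case False
        then have "a = de" "b < dm" using that by auto
        then show ?thesis by simp
      qed
      then show ?thesis using ne[OF that(1,2)] h by auto
    qed
    then show "(de, dm) \<in> falsification_frontier m1 m2 s1 s2"
      unfolding falsification_frontier_def using h nn by auto
  qed
qed

end
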